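(* Let $\Gamma$ be a distance-regular graph with valency $k$ and diameter $D\geq 2$, and let $\alpha=\lceil \frac{k}{a_1+1}\rceil$. Then $$c_2-1\geq \frac{\alpha(a_1+1)-k}{\binom{\alpha}{2}},$$ and if equality holds then $\Gamma$ is a Terwilliger graph.
   Context: A connected graph $\Gamma$ of diameter $D$ is distance-regular if there are integers $b_i,c_i$ ($0\le i\le D$) such that for any two vertices $x,y$ at distance $i$, exactly $c_i$ neighbours of $y$ are at distance $i-1$ from $x$ and exactly $b_i$ neighbours of $y$ are at distance $i+1$ from $x$. Then $\Gamma$ is regular of valency $k=b_0$, and $a_i:=k-b_i-c_i$. A Terwilliger graph is a connected non-complete graph such that for any two vertices $u,v$ at distance two, the subgraph induced on their common neighbours is a clique of size $\mu$, for some fixed $\mu\geq 1$. *)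

theory Defs
  imports Complex_Main
begin

definition simple_graph :: "'a set \<Rightarrow> ('a \<Rightarrow> 'a \<Rightarrow> bool) \<Rightarrow> bool" where
  "simple_graph V E \<longleftrightarrow> finite V \<and> V \<noteq> {} \<and>
     (\<forall>x y. E x y \<longrightarrow> x \<in> V \<and> y \<in> V) \<and>
     (\<forall>x y. E x y \<longrightarrow> E y x) \<and> (\<forall>x. \<not> E x x)"

fun walk :: "('a \<Rightarrow> 'a \<Rightarrow> bool) \<Rightarrow> nat \<Rightarrow> 'a \<Rightarrow> 'a \<Rightarrow> bool" where
  "walk E 0 x y = (x = y)"
| "walk E (Suc n) x y = (\<exists>z. E x z \<and> walk E n z y)"

definition connected_graph :: "'a set \<Rightarrow> ('a \<Rightarrow> 'a \<Rightarrow> bool) \<Rightarrow> bool" where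
  "connected_graph V E \<longleftrightarrow> (\<forall>x\<in>V. \<forall>y\<in>V. \<exists>n. walk E n x y)"

definition gdist :: "('a \<Rightarrow> 'a \<Rightarrow> bool) \<Rightarrow> 'a \<Rightarrow> 'a \<Rightarrow> nat" where
  "gdist E x y = (LEAST n. walk E n x y)"

definition diameter :: "'a set \<Rightarrow> ('a \<Rightarrow> 'a \<Rightarrow> bool) \<Rightarrow> nat" where
  "diameter V E = Max {gdist E x y | x y. x \<in> V \<and> y \<in> V}"

text \<open>Distance-regular with diameter D and intersection numbers b i, c i (0 \<le> i \<le> D).
  Valency k = b 0 (regularity follows from the case i = 0).\<close>
definition distance_regular ::
  "'a set \<Rightarrow> ('a \<Rightarrow> 'a \<Rightarrow> bool) \<Rightarrow> nat \<Rightarrow> (nat \<Rightarrow> nat) \<Rightarrow> (nat \<Rightarrow> nat) \<Rightarrow> bool" where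
  "distance_regular V E D b c \<longleftrightarrow>
     simple_graph V E \<and> connected_graph V E \<and> diameter V E = D \<and>
     (\<forall>i\<le>D. \<forall>x\<in>V. \<forall>y\<in>V. gdist E x y = i \<longrightarrow>
        (i \<ge> 1 \<longrightarrow> card {z\<in>V. E y z \<and> gdist E x z = i - 1} = c i) \<and>
        card {z\<in>V. E y z \<and> gdist E x z = i + 1} = b i)"

definition is_clique :: "('a \<Rightarrow> 'a \<Rightarrow> bool) \<Rightarrow> 'a set \<Rightarrow> bool" where
  "is_clique E S \<longleftrightarrow> (\<forall>x\<in>S. \<forall>y\<in>S. x \<noteq> y \<longrightarrow> E x y)"

definition complete_graph :: "'a set \<Rightarrow> ('a \<Rightarrow> 'a \<Rightarrow> bool) \<Rightarrow> bool" where
  "complete_graph V E \<longleftrightarrow> is_clique E V"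

definition terwilliger_graph :: "'a set \<Rightarrow> ('a \<Rightarrow> 'a \<Rightarrow> bool) \<Rightarrow> bool" where
  "terwilliger_graph V E \<longleftrightarrow> connected_graph V E \<and> \<not> complete_graph V E \<and>
     (\<exists>\<mu>::nat. \<mu> \<ge> 1 \<and> (\<forall>u\<in>V. \<forall>v\<in>V. gdist E u v = 2 \<longrightarrow>
        (let S = {w\<in>V. E u w \<and> E v w} in is_clique E S \<and> card S = \<mu>)))"

end

theory Submission
  imports Defs
begin

lemma walk_append: "walk E n x y \<Longrightarrow> walk E m y z \<Longrightarrow> walk E (n+m) x z"
  by (induction n arbitrary: x) auto

lemma bonf:
  fixes A :: "'i \<Rightarrow> 'b set"
  assumes "finite C" "\<And>i. i \<in> C \<Longrightarrow> finite (A i)"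
  shows "2 * (\<Sum>i\<in>C. card (A i)) \<le> 2 * card (\<Union>i\<in>C. A i) + (\<Sum>i\<in>C. \<Sum>j\<in>C-{i}. card (A i \<inter> A j))"
  using assms
proof (induction C rule: finite_induct)
  case empty show ?case by simp
next
  case (insert a C)
  let ?U = "\<Union>i\<in>C. A i"
  have fU: "finite ?U" using insert by auto
  have fa: "finite (A a)" using insert by auto
  have un: "card (A a) + card ?U = card (A a \<union> ?U) + card (A a \<inter> ?U)"
    using card_Un_Int[OF fa fU] .
  have eq: "A a \<inter> ?U = (\<Union>j\<in>C. A a \<inter> A j)" by auto
  have int: "card (A a \<inter> ?U) \<le> (\<Sum>j\<in>C. card (A a \<inter> A j))"
    unfolding eq by (rule card_UN_le[OF insert(1)])
  have s1: "(\<Sum>j\<in>insert a C - {a}. card (A a \<inter> A j)) = (\<Sum>j\<in>C. card (A a \<inter> A j))"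
    using insert(2) by (metis Diff_insert_absorb)
  have s2: "(\<Sum>j\<in>insert a C - {i}. card (A i \<inter> A j)) = card (A i \<inter> A a) + (\<Sum>j\<in>C-{i}. card (A i \<inter> A j))"
    if "i \<in> C" for i
  proof -
    have "insert a C - {i} = insert a (C - {i})" using that insert(2) by auto
    then show ?thesis using insert(1,2) by simp
  qed
  have ps: "(\<Sum>i\<in>insert a C. \<Sum>j\<in>insert a C - {i}. card (A i \<inter> A j)) =
     (\<Sum>j\<in>C. card (A a \<inter> A j)) + ((\<Sum>i\<in>C. card (A i \<inter> A a)) + (\<Sum>i\<in>C. \<Sum>j\<in>C-{i}. card (A i \<inter> A j)))"
    using insert(1,2) s1 s2 by (simp add: sum.distrib)
  have comm: "(\<Sum>i\<in>C. card (A i \<inter> A a)) = (\<Sum>j\<in>C. card (A a \<inter> A j))"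
    by (simp add: Int_commute)
  have IH: "2 * (\<Sum>i\<in>C. card (A i)) \<le> 2 * card ?U + (\<Sum>i\<in>C. \<Sum>j\<in>C-{i}. card (A i \<inter> A j))"
    using insert by auto
  have "(\<Union>i\<in>insert a C. A i) = A a \<union> ?U" by simp
  then show ?case using insert(1,2) ps comm IH un int by simp
qed

locale drg =
  fixes V :: "'a set" and E :: "'a \<Rightarrow> 'a \<Rightarrow> bool" and D :: nat and b c :: "nat \<Rightarrow> nat"
  assumes dr: "distance_regular V E D b c" and D2: "D \<ge> 2"
begin

lemma sg: "simple_graph V E" using dr unfolding distance_regular_def by auto
lemma conn: "connected_graph V E" using dr unfolding distance_regular_def by auto
lemma finV: "finite V" using sg unfolding simple_graph_def by auto
lemma EV: "E x y \<Longrightarrow> x \<in> V \<and> y \<in> V" using sg unfolding simple_graph_def by auto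
lemma Esym: "E x y \<Longrightarrow> E y x" using sg unfolding simple_graph_def by auto
lemma Eirr: "\<not> E x x" using sg unfolding simple_graph_def by auto

lemma gd_walk: "x \<in> V \<Longrightarrow> y \<in> V \<Longrightarrow> walk E (gdist E x y) x y"
  using conn unfolding connected_graph_def gdist_def by (meson LeastI_ex)
lemma gd_le: "walk E n x y \<Longrightarrow> gdist E x y \<le> n"
  unfolding gdist_def by (rule Least_le)

lemma gd0: "x \<in> V \<Longrightarrow> y \<in> V \<Longrightarrow> gdist E x y = 0 \<longleftrightarrow> x = y"
  using gd_walk[of x y] gd_le[of 0 x x] by auto

lemma gd1: "x \<in> V \<Longrightarrow> y \<in> V \<Longrightarrow> gdist E x y = 1 \<longleftrightarrow> E x y"
proof
  assume "x \<in> V" "y \<in> V" "gdist E x y = 1"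
  then have "walk E (Suc 0) x y" using gd_walk by fastforce
  then show "E x y" by simp
next
  assume a: "x \<in> V" "y \<in> V" "E x y"
  have "walk E (Suc 0) x y" using a by simp
  then have "gdist E x y \<le> 1" using gd_le by fastforce
  moreover have "x \<noteq> y" using a Eirr by auto
  ultimately show "gdist E x y = 1" using gd0 a by fastforce
qed

lemma gd2: "x \<in> V \<Longrightarrow> y \<in> V \<Longrightarrow> gdist E x y = 2 \<longleftrightarrow> (x \<noteq> y \<and> \<not> E x y \<and> (\<exists>z. E x z \<and> E z y))"
proof
  assume a: "x \<in> V" "y \<in> V" "gdist E x y = 2"
  then have "walk E (Suc (Suc 0)) x y" using gd_walk by (metis numeral_2_eq_2)
  moreover have "x \<noteq> y" using a gd0[of x y] by auto
  moreover have "\<not> E x y" using a gd1[of x y] by auto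
  ultimately show "x \<noteq> y \<and> \<not> E x y \<and> (\<exists>z. E x z \<and> E z y)" by auto
next
  assume a: "x \<in> V" "y \<in> V" "x \<noteq> y \<and> \<not> E x y \<and> (\<exists>z. E x z \<and> E z y)"
  then have "walk E (Suc (Suc 0)) x y" by auto
  then have "gdist E x y \<le> 2" using gd_le by fastforce
  then show "gdist E x y = 2" using a gd0 gd1 by (metis One_nat_def le_SucE numeral_2_eq_2 le_zero_eq)
qed

lemma drp: "i \<le> D \<Longrightarrow> x \<in> V \<Longrightarrow> y \<in> V \<Longrightarrow> gdist E x y = i \<Longrightarrow>
   (i \<ge> 1 \<longrightarrow> card {z\<in>V. E y z \<and> gdist E x z = i - 1} = c i) \<and>
   card {z\<in>V. E y z \<and> gdist E x z = i + 1} = b i"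
  using dr unfolding distance_regular_def by blast

lemma deg: "y \<in> V \<Longrightarrow> card {z\<in>V. E y z} = b 0"
proof -
  assume y: "y \<in> V"
  have "card {z\<in>V. E y z \<and> gdist E y z = 0 + 1} = b 0" using drp[of 0 y y] y gd0 by auto
  moreover have "{z\<in>V. E y z \<and> gdist E y z = 0 + 1} = {z\<in>V. E y z}" using gd1 y by auto
  ultimately show ?thesis by simp
qed

lemma mu: "x \<in> V \<Longrightarrow> y \<in> V \<Longrightarrow> gdist E x y = 2 \<Longrightarrow> card {z\<in>V. E x z \<and> E y z} = c 2"
proof -
  assume a: "x \<in> V" "y \<in> V" "gdist E x y = 2"
  have "card {z\<in>V. E y z \<and> gdist E x z = 2 - 1} = c 2" using drp[of 2 x y] a D2 by auto
  moreover have "{z\<in>V. E y z \<and> gdist E x z = 2 - 1} = {z\<in>V. E x z \<and> E y z}"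
    using gd1 a by auto
  ultimately show ?thesis by simp
qed

lemma lam: assumes e: "E x y"
  shows "b 0 = card {z\<in>V. E x z \<and> E y z} + 1 + card {z\<in>V. E y z \<and> gdist E x z = 2}"
    and "c 1 = 1" and "b 1 = card {z\<in>V. E y z \<and> gdist E x z = 2}"
proof -
  have xy: "x \<in> V" "y \<in> V" using EV e by auto
  have g1: "gdist E x y = 1" using gd1 xy e by auto
  have d: "1 \<le> D" using D2 by auto
  have c1: "card {z\<in>V. E y z \<and> gdist E x z = 1 - 1} = c 1"
    and b1: "card {z\<in>V. E y z \<and> gdist E x z = 1 + 1} = b 1" using drp[OF d xy g1] by auto
  have "{z\<in>V. E y z \<and> gdist E x z = 1 - 1} = {x}" using gd0 xy Esym e by auto
  with c1 show "c 1 = 1" by simp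
  from b1 show "b 1 = card {z\<in>V. E y z \<and> gdist E x z = 2}" by (simp add: numeral_2_eq_2)
  let ?A = "{z\<in>V. E x z \<and> E y z}" and ?B = "{z\<in>V. E y z \<and> gdist E x z = 2}"
  have part: "{z\<in>V. E y z} = insert x (?A \<union> ?B)"
  proof (rule set_eqI, rule iffI)
    fix z assume z: "z \<in> {z\<in>V. E y z}"
    then have "walk E (Suc (Suc 0)) x z" using e by auto
    then have "gdist E x z \<le> 2" using gd_le by fastforce
    then have "gdist E x z = 0 \<or> gdist E x z = 1 \<or> gdist E x z = 2" by auto
    then show "z \<in> insert x (?A \<union> ?B)" using z gd0[of x z] gd1[of x z] xy by auto
  next
    fix z assume "z \<in> insert x (?A \<union> ?B)"
    then show "z \<in> {z\<in>V. E y z}" using xy e Esym by auto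
  qed
  have fA: "finite ?A" "finite ?B" using finV by auto
  have "x \<notin> ?A" using Eirr by auto
  moreover have "x \<notin> ?B" using gd0[of x x] xy by auto
  moreover have "?A \<inter> ?B = {}" using gd1 xy by fastforce
  ultimately have "card (insert x (?A \<union> ?B)) = 1 + card ?A + card ?B"
    using fA by (simp add: card_Un_disjoint)
  then show "b 0 = card ?A + 1 + card ?B" using part deg[OF xy(2)] by simp
qed

lemma a1_eq: "E x y \<Longrightarrow> card {z\<in>V. E x z \<and> E y z} = b 0 - b 1 - c 1"
  using lam by fastforce

lemma dist2_ex: "\<exists>u\<in>V. \<exists>v\<in>V. gdist E u v = 2"
proof -
  let ?S = "{gdist E x y | x y. x \<in> V \<and> y \<in> V}"
  have "?S = (\<lambda>(x,y). gdist E x y) ` (V \<times> V)" by auto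
  then have fin: "finite ?S" using finV by simp
  obtain x0 where "x0 \<in> V" using sg unfolding simple_graph_def by auto
  then have ne: "?S \<noteq> {}" by blast
  have "diameter V E = D" using dr unfolding distance_regular_def by auto
  then have "D \<in> ?S" using Max_in[OF fin ne] unfolding diameter_def by simp
  then obtain x y where xy: "x \<in> V" "y \<in> V" "gdist E x y = D" by auto
  obtain m where m: "D = Suc (Suc m)" using D2 by (metis add_2_eq_Suc le_Suc_ex)
  have "walk E (Suc (Suc m)) x y" using gd_walk xy m by metis
  then obtain z1 z2 where z: "E x z1" "E z1 z2" "walk E m z2 y" by auto
  have zV: "z2 \<in> V" using EV z by auto
  have "x \<noteq> z2"
  proof
    assume "x = z2"
    then have "gdist E x y \<le> m" using gd_le z by auto
    then show False using xy m by auto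
  qed
  moreover have "\<not> E x z2"
  proof
    assume "E x z2"
    then have "walk E (Suc m) x y" using z by auto
    then have "gdist E x y \<le> Suc m" using gd_le by auto
    then show False using xy m by auto
  qed
  ultimately have "gdist E x z2 = 2" using gd2 xy zV z by auto
  then show ?thesis using xy zV by auto
qed

lemma core:
  fixes \<alpha> m :: nat
  assumes al: "\<alpha> = nat \<lceil>real (b 0) / real (b 0 - b 1 - c 1 + 1)\<rceil>"
    and xu: "E x u" and xv: "E x v" and uv: "gdist E u v = 2"
    and mm: "card {z\<in>V. E x z \<and> E u z \<and> E v z} \<le> m" and m1: "m \<le> c 2 - 1"
  shows "2 \<le> \<alpha> \<and> 2 * (\<alpha> * (b 0 - b 1 - c 1 + 1)) \<le> 2 * b 0 + (\<alpha> * (\<alpha> - 1) - 2) * (c 2 - 1) + 2 * m"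
proof -
  let ?k = "b 0" and ?a = "b 0 - b 1 - c 1"
  have xV: "x \<in> V" and uV: "u \<in> V" and vV: "v \<in> V" using EV xu xv by auto
  have uv': "u \<noteq> v" "\<not> E u v" using gd2[OF uV vV] uv by auto
  define \<Delta> where "\<Delta> = {z\<in>V. E x z}"
  have fD: "finite \<Delta>" using finV \<Delta>_def by auto
  have cD: "card \<Delta> = ?k" using deg xV \<Delta>_def by simp
  define A where "A w = insert w {z\<in>V. E x z \<and> E w z}" for w
  have cA: "card (A w) = ?a + 1" if "w \<in> \<Delta>" for w
  proof -
    have "E x w" using that \<Delta>_def by auto
    then have "card {z\<in>V. E x z \<and> E w z} = ?a" using a1_eq by blast
    moreover have "w \<notin> {z\<in>V. E x z \<and> E w z}" using Eirr by auto
    moreover have "finite {z\<in>V. E x z \<and> E w z}" using finV by auto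
    ultimately show ?thesis unfolding A_def by simp
  qed
  have AD: "A w \<subseteq> \<Delta>" if "w \<in> \<Delta>" for w using that unfolding A_def \<Delta>_def by auto
  have fA: "finite (A w)" for w using finV unfolding A_def by auto
  have "?k = card {z\<in>V. E u z \<and> E x z} + 1 + card {z\<in>V. E x z \<and> gdist E u z = 2}"
    using lam(1)[OF Esym[OF xu]] .
  moreover have "card {z\<in>V. E u z \<and> E x z} = ?a" using a1_eq[OF Esym[OF xu]] .
  moreover have "card {z\<in>V. E x z \<and> gdist E u z = 2} \<ge> 1"
  proof -
    have "v \<in> {z\<in>V. E x z \<and> gdist E u z = 2}" using vV xv uv by auto
    moreover have "finite {z\<in>V. E x z \<and> gdist E u z = 2}" using finV by auto
    ultimately show ?thesis by (metis One_nat_def Suc_leI card_gt_0_iff empty_iff)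
  qed
  ultimately have kbig: "?k \<ge> ?a + 2" by linarith
  have al2: "\<alpha> \<ge> 2"
  proof -
    have "real ?k > real (?a + 1)" using kbig by simp
    then have "1 < real ?k / real (?a + 1)" by (simp add: field_simps)
    then have "1 < \<lceil>real ?k / real (?a + 1)\<rceil>" by (simp add: less_ceiling_iff)
    then show ?thesis using al by linarith
  qed
  define F where "F = {S. S \<subseteq> \<Delta> \<and> u \<in> S \<and> v \<in> S \<and> (\<forall>p\<in>S. \<forall>q\<in>S. \<not> E p q)}"
  have uvF: "{u, v} \<in> F" unfolding F_def \<Delta>_def using uV vV xu xv uv' Eirr Esym by auto
  have fF: "finite F" using fD unfolding F_def by (simp add: finite_subset[of _ "Pow \<Delta>"] subset_iff)
  have neF: "card ` F \<noteq> {}" using uvF by auto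
  obtain S where SF: "S \<in> F" and Smax: "card S = Max (card ` F)"
    using Max_in[OF finite_imageI[OF fF] neF] by auto
  have Smax': "card T \<le> card S" if "T \<in> F" for T using Smax that fF by simp
  have SD: "S \<subseteq> \<Delta>" and uS: "u \<in> S" and vS: "v \<in> S" and Scl: "\<forall>p\<in>S. \<forall>q\<in>S. \<not> E p q"
    using SF unfolding F_def by auto
  have fS: "finite S" using SD fD finite_subset by auto
  have cover: "\<Delta> \<subseteq> (\<Union>w\<in>S. A w)"
  proof
    fix z assume zD: "z \<in> \<Delta>"
    show "z \<in> (\<Union>w\<in>S. A w)"
    proof (cases "z \<in> S \<or> (\<exists>w\<in>S. E w z)")
      case True
      then show ?thesis using zD unfolding A_def \<Delta>_def by auto
    next
      case False
      then have "insert z S \<in> F" using SF zD Esym Eirr unfolding F_def by auto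
      then have "card (insert z S) \<le> card S" using Smax' by blast
      then show ?thesis using False fS by simp
    qed
  qed
  have "?k \<le> card (\<Union>w\<in>S. A w)" using cover cD card_mono fA fS by (metis finite_UN_I)
  also have "\<dots> \<le> (\<Sum>w\<in>S. card (A w))" by (rule card_UN_le[OF fS])
  also have "\<dots> = card S * (?a + 1)" using cA SD by (simp add: subset_iff)
  finally have kS: "?k \<le> card S * (?a + 1)" .
  have alS: "\<alpha> \<le> card S"
  proof -
    have "real ?k \<le> real (card S) * real (?a + 1)" using kS by (metis of_nat_le_iff of_nat_mult)
    then have "real ?k / real (?a + 1) \<le> real (card S)" by (simp add: divide_le_eq)
    then have "\<lceil>real ?k / real (?a + 1)\<rceil> \<le> int (card S)" by (simp add: ceiling_le)
    then show ?thesis using al by linarith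
  qed
  have cS2: "card (S - {u, v}) = card S - 2" using uS vS uv' fS by (simp add: card_Diff_subset)
  obtain T where T: "T \<subseteq> S - {u, v}" "card T = \<alpha> - 2" "finite T"
  proof -
    have "\<alpha> - 2 \<le> card (S - {u,v})" using cS2 alS by simp
    then show ?thesis using obtain_subset_with_card_n that by metis
  qed
  define C where "C = insert u (insert v T)"
  have cC: "card C = \<alpha>"
  proof -
    have "u \<notin> T" "v \<notin> T" using T by auto
    then have "card (insert u (insert v T)) = Suc (Suc (card T))" using T(3) uv' by simp
    then show ?thesis unfolding C_def using T(2) al2 by simp
  qed
  have fC: "finite C" unfolding C_def using T by auto
  have CS: "C \<subseteq> S" unfolding C_def using T uS vS by auto
  have CD: "C \<subseteq> \<Delta>" using CS SD by auto
  have uC: "u \<in> C" and vC: "v \<in> C" unfolding C_def by auto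
  have Ccl: "\<not> E p q" if "p \<in> C" "q \<in> C" for p q using Scl CS that by auto
  have B: "2 * (\<Sum>i\<in>C. card (A i)) \<le> 2 * card (\<Union>i\<in>C. A i) + (\<Sum>i\<in>C. \<Sum>j\<in>C-{i}. card (A i \<inter> A j))"
    using bonf[OF fC, of A] fA by blast
  have s1: "(\<Sum>i\<in>C. card (A i)) = \<alpha> * (?a + 1)" using cA CD cC by (simp add: subset_iff)
  have s2: "card (\<Union>i\<in>C. A i) \<le> ?k"
  proof -
    have "(\<Union>i\<in>C. A i) \<subseteq> \<Delta>" using AD CD by auto
    then show ?thesis using card_mono[OF fD] cD by metis
  qed
  have Aint: "A i \<inter> A j = {z\<in>V. E x z \<and> E i z \<and> E j z}" if "i \<in> C" "j \<in> C" "i \<noteq> j" for i j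
    using that Ccl unfolding A_def by auto
  define f where "f p = card (A (fst p) \<inter> A (snd p))" for p
  have fb: "f p \<le> c 2 - 1" if pP: "p \<in> Sigma C (\<lambda>i. C - {i})" for p
  proof -
    obtain i j where p: "p = (i, j)" "i \<in> C" "j \<in> C" "i \<noteq> j" using pP by (cases p) auto
    have iV: "i \<in> V" and jV: "j \<in> V" using p CD \<Delta>_def by auto
    have xi: "E x i" "E x j" using p CD \<Delta>_def by auto
    have "gdist E i j = 2" using gd2[OF iV jV] p Ccl xi Esym by blast
    then have cc: "card {z\<in>V. E i z \<and> E j z} = c 2" using mu iV jV by blast
    have "A i \<inter> A j \<subseteq> {z\<in>V. E i z \<and> E j z} - {x}" using Aint[OF p(2-4)] Eirr by auto
    moreover have xin: "x \<in> {z\<in>V. E i z \<and> E j z}" using xi xV Esym by auto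
    ultimately have "card (A i \<inter> A j) \<le> card ({z\<in>V. E i z \<and> E j z} - {x})"
      using finV by (intro card_mono) auto
    also have "\<dots> = c 2 - 1" using cc xin finV by (simp add: card_Diff_singleton)
    finally show ?thesis using p unfolding f_def by simp
  qed
  have fuv: "f (u, v) \<le> m" "f (v, u) \<le> m"
  proof -
    have "A u \<inter> A v = {z\<in>V. E x z \<and> E u z \<and> E v z}" using Aint uC vC uv' by blast
    then show "f (u, v) \<le> m" using mm unfolding f_def by simp
    have "A v \<inter> A u = {z\<in>V. E x z \<and> E u z \<and> E v z}" using Aint uC vC uv' by blast
    then show "f (v, u) \<le> m" using mm unfolding f_def by simp
  qed
  let ?P = "Sigma C (\<lambda>i. C - {i})" and ?Q = "{(u, v), (v, u)}"
  have fP: "finite ?P" using fC by auto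
  have cP: "card ?P = \<alpha> * (\<alpha> - 1)"
  proof -
    have "card ?P = (\<Sum>i\<in>C. card (C - {i}))" using fC by (simp add: card_SigmaI)
    also have "\<dots> = (\<Sum>i\<in>C. \<alpha> - 1)" using cC fC by (simp add: card_Diff_singleton)
    finally show ?thesis using cC by simp
  qed
  have QP: "?Q \<subseteq> ?P" using uC vC uv' by auto
  have cQ: "card ?Q = 2" using uv' by auto
  have "(\<Sum>i\<in>C. \<Sum>j\<in>C-{i}. card (A i \<inter> A j)) = sum f ?P"
    unfolding f_def using sum.Sigma[OF fC, of "\<lambda>i. C - {i}" "\<lambda>i j. card (A i \<inter> A j)"] fC
    by (simp add: split_def)
  also have "\<dots> = sum f (?P - ?Q) + sum f ?Q" using sum.subset_diff[OF QP fP] .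
  also have "sum f (?P - ?Q) \<le> card (?P - ?Q) * (c 2 - 1)"
    using sum_bounded_above[of "?P - ?Q" f "c 2 - 1"] fb by auto
  also have "card (?P - ?Q) = \<alpha> * (\<alpha> - 1) - 2" using card_Diff_subset[OF _ QP] cP cQ by auto
  also have "sum f ?Q = f (u, v) + f (v, u)" using uv' by simp
  finally have "(\<Sum>i\<in>C. \<Sum>j\<in>C-{i}. card (A i \<inter> A j)) \<le> (\<alpha> * (\<alpha> - 1) - 2) * (c 2 - 1) + 2 * m"
    using fuv by linarith
  then show ?thesis using B s1 s2 al2 by linarith
qed

end

lemma realize:
  fixes \<alpha> a k c2 r :: nat
  assumes "\<alpha> \<ge> 2" "c2 \<ge> 1" "2*(\<alpha>*(a+1)) + 2*r \<le> 2*k + \<alpha>*(\<alpha>-1)*(c2-1)"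
  shows "real (\<alpha>*(a+1)) - real k + real r \<le> real (\<alpha> choose 2) * (real c2 - 1)"
proof -
  have ev: "even (\<alpha>*(\<alpha>-1))" by (cases "even \<alpha>") auto
  have "\<alpha> choose 2 = \<alpha>*(\<alpha>-1) div 2" by (simp add: choose_two)
  then have ch: "2 * (\<alpha> choose 2) = \<alpha>*(\<alpha>-1)" using ev by simp
  have "real (2*(\<alpha>*(a+1)) + 2*r) \<le> real (2*k + \<alpha>*(\<alpha>-1)*(c2-1))"
    using assms(3) of_nat_le_iff by blast
  then have "2*real (\<alpha>*(a+1)) + 2*real r \<le> 2*real k + real (2 * (\<alpha> choose 2)) * real (c2-1)"
    unfolding ch by simp
  moreover have "real (c2 - 1) = real c2 - 1" using assms(2) by simp
  ultimately show ?thesis by simp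
qed

lemma natarith1: "(X::nat) \<ge> 2 \<Longrightarrow> (X - 2)*y + 2*y = X*y"
  by (metis add_mult_distrib le_add_diff_inverse2)

lemma natarith2: "(X::nat) \<ge> 2 \<Longrightarrow> y \<ge> 1 \<Longrightarrow> (X - 2)*y + 2*(y-1) + 2 = X*y"
  using natarith1[of X y] by (simp add: diff_mult_distrib2)

theorem theorem4:
  fixes V :: "'a set" and E :: "'a \<Rightarrow> 'a \<Rightarrow> bool" and D :: nat and b c :: "nat \<Rightarrow> nat"
  assumes "distance_regular V E D b c" and "D \<ge> 2"
  defines "k \<equiv> b 0"
  defines "a1 \<equiv> k - b 1 - c 1"
  defines "\<alpha> \<equiv> nat \<lceil>real k / real (a1 + 1)\<rceil>"
  shows "real (c 2) - 1 \<ge> (real (\<alpha> * (a1 + 1)) - real k) / real (\<alpha> choose 2) \<and>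
         (real (c 2) - 1 = (real (\<alpha> * (a1 + 1)) - real k) / real (\<alpha> choose 2)
           \<longrightarrow> terwilliger_graph V E)"
proof -
  interpret drg V E D b c using assms(1,2) by unfold_locales
  have al: "\<alpha> = nat \<lceil>real (b 0) / real (b 0 - b 1 - c 1 + 1)\<rceil>" unfolding \<alpha>_def a1_def k_def ..
  obtain u v where uV: "u \<in> V" and vV: "v \<in> V" and uv: "gdist E u v = 2" using dist2_ex by blast
  obtain x where ux: "E u x" and xv: "E x v" using gd2[OF uV vV] uv by blast
  have xV: "x \<in> V" using EV ux by auto
  have cuv: "card {z\<in>V. E u z \<and> E v z} = c 2" using mu uV vV uv by blast
  have xin: "x \<in> {z\<in>V. E u z \<and> E v z}" using xV ux xv Esym by auto
  have c21: "c 2 \<ge> 1" using cuv xin finV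
    by (metis (no_types, lifting) One_nat_def Suc_leI card_gt_0_iff empty_iff finite_subset mem_Collect_eq subsetI)
  have "{z\<in>V. E x z \<and> E u z \<and> E v z} \<subseteq> {z\<in>V. E u z \<and> E v z} - {x}" using Eirr by auto
  then have "card {z\<in>V. E x z \<and> E u z \<and> E v z} \<le> card ({z\<in>V. E u z \<and> E v z} - {x})"
    using finV by (intro card_mono) auto
  also have "\<dots> = c 2 - 1" using cuv xin finV by (simp add: card_Diff_singleton)
  finally have mm: "card {z\<in>V. E x z \<and> E u z \<and> E v z} \<le> c 2 - 1" .
  from core[OF al Esym[OF ux] xv uv mm le_refl]
  have al2: "\<alpha> \<ge> 2" and ineq: "2 * (\<alpha> * (a1 + 1)) \<le> 2 * k + (\<alpha> * (\<alpha> - 1) - 2) * (c 2 - 1) + 2 * (c 2 - 1)"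
    unfolding a1_def k_def by auto
  have X2: "\<alpha> * (\<alpha> - 1) \<ge> 2" 
  proof -
    have "2 * 1 \<le> \<alpha> * (\<alpha> - 1)" using al2 by (intro mult_le_mono) auto
    then show ?thesis by simp
  qed
  have ineq2: "2 * (\<alpha> * (a1 + 1)) + 2 * 0 \<le> 2 * k + \<alpha> * (\<alpha> - 1) * (c 2 - 1)"
    using ineq natarith1[OF X2, of "c 2 - 1"] by simp
  have Npos: "real (\<alpha> choose 2) > 0" using al2 by simp
  have main: "real (\<alpha> * (a1 + 1)) - real k \<le> real (\<alpha> choose 2) * (real (c 2) - 1)"
    using realize[OF al2 c21 ineq2] by simp
  have part1: "real (c 2) - 1 \<ge> (real (\<alpha> * (a1 + 1)) - real k) / real (\<alpha> choose 2)"
    using main Npos by (simp add: divide_le_eq mult.commute)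
  have part2: "terwilliger_graph V E"
    if eq: "real (c 2) - 1 = (real (\<alpha> * (a1 + 1)) - real k) / real (\<alpha> choose 2)"
  proof -
    have eq': "real (\<alpha> * (a1 + 1)) - real k = real (\<alpha> choose 2) * (real (c 2) - 1)"
      using eq Npos by (simp add: field_simps)
    have clq: "is_clique E {w\<in>V. E p w \<and> E q w}" if pq: "p \<in> V" "q \<in> V" "gdist E p q = 2" for p q
    proof (rule ccontr)
      assume "\<not> is_clique E {w\<in>V. E p w \<and> E q w}"
      then obtain w1 w2 where w: "w1 \<in> V" "E p w1" "E q w1" "w2 \<in> V" "E p w2" "E q w2" "w1 \<noteq> w2" "\<not> E w1 w2"
        unfolding is_clique_def by blast
      have cpq: "card {z\<in>V. E p z \<and> E q z} = c 2" using mu pq by blast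
      have sub: "{w1, w2} \<subseteq> {z\<in>V. E p z \<and> E q z}" using w by auto
      have "card {w1, w2} \<le> c 2" using card_mono[OF _ sub] finV cpq by auto
      then have c22: "c 2 \<ge> 2" using w(7) by simp
      have "{z\<in>V. E w1 z \<and> E p z \<and> E q z} \<subseteq> {z\<in>V. E p z \<and> E q z} - {w1, w2}" using Eirr w by auto
      then have "card {z\<in>V. E w1 z \<and> E p z \<and> E q z} \<le> card ({z\<in>V. E p z \<and> E q z} - {w1, w2})"
        using finV by (intro card_mono) auto
      also have "\<dots> = c 2 - 2" using cpq sub finV w(7) by (simp add: card_Diff_subset)
      finally have mm2: "card {z\<in>V. E w1 z \<and> E p z \<and> E q z} \<le> c 2 - 2" .
      have "c 2 - 2 \<le> c 2 - 1" by simp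
      from core[OF al Esym[OF w(2)] Esym[OF w(3)] pq(3) mm2 this]
      have ineq3: "2 * (\<alpha> * (a1 + 1)) \<le> 2 * k + (\<alpha> * (\<alpha> - 1) - 2) * (c 2 - 1) + 2 * (c 2 - 2)"
        unfolding a1_def k_def by auto
      have "(\<alpha> * (\<alpha> - 1) - 2) * (c 2 - 1) + 2 * (c 2 - 1 - 1) + 2 = \<alpha> * (\<alpha> - 1) * (c 2 - 1)"
        using natarith2[OF X2, of "c 2 - 1"] c22 by simp
      then have ineq4: "2 * (\<alpha> * (a1 + 1)) + 2 * 1 \<le> 2 * k + \<alpha> * (\<alpha> - 1) * (c 2 - 1)"
        using ineq3 by (simp add: numeral_2_eq_2)
      have "real (\<alpha> * (a1 + 1)) - real k + real (1::nat) \<le> real (\<alpha> choose 2) * (real (c 2) - 1)"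
        using realize[OF al2 c21 ineq4] .
      then show False using eq' by simp
    qed
    have "connected_graph V E" using conn .
    moreover have "\<not> complete_graph V E"
      using uV vV uv gd2[OF uV vV] unfolding complete_graph_def is_clique_def by blast
    moreover have "\<forall>p\<in>V. \<forall>q\<in>V. gdist E p q = 2 \<longrightarrow>
        (let S = {w\<in>V. E p w \<and> E q w} in is_clique E S \<and> card S = c 2)"
      using clq mu by (simp add: Let_def)
    ultimately show ?thesis unfolding terwilliger_graph_def using c21 by blast
  qed
  show ?thesis using part1 part2 by blast
qed

end
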